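(* (1) If $a_t\in HKa_sK$ for some $s>0$, then $|t|\le s$. (2) Given any $\epsilon>0$, there exists $T_0=T_0(\epsilon)$ such that $$\{k\in K: a_tk\in HKA^+\text{ for some }t>T_0\}\subset K_\epsilon M.$$
   Context: $G=\mathrm{PSL}_2(\mathbb C)$, $K=\mathrm{PSU}(2)$, $a_t=\mathrm{diag}(e^{t/2},e^{-t/2})$, $A^+=\{a_t:t\ge0\}$, $M=\{\mathrm{diag}(e^{i\theta},e^{-i\theta}):\theta\in\mathbb R\}$, $H$ is the stabilizer in $G$ of the unit circle $C_0$ centered at $0$ (equivalently of its convex hull, the unit hemisphere in $\mathbb H^3$). A left-invariant metric on $G$ is fixed; $U_\epsilon$ is the $\epsilon$-ball around $e$ and $K_\epsilon=K\cap U_\epsilon$. *)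

theory Defs
  imports "HOL-Analysis.Analysis"
begin

text \<open>Elements of G = PSL_2(C) are represented by matrices in SL_2(C); the
matrices g and -g represent the same element of G.\<close>

type_synonym cmat = "complex^2^2"

definition mk2 :: "complex \<Rightarrow> complex \<Rightarrow> complex \<Rightarrow> complex \<Rightarrow> cmat" where
  "mk2 a b c d = (\<chi> i j. if i = 1 then (if j = 1 then a else b) else (if j = 1 then c else d))"

definition SL2 :: "cmat set" where
  "SL2 = {g. det g = 1}"

definition conj_transpose :: "cmat \<Rightarrow> cmat" where
  "conj_transpose g = (\<chi> i j. cnj (g $ j $ i))"

text \<open>Preimage of K = PSU(2) in SL_2(C), i.e. SU(2).\<close>
definition Kgrp :: "cmat set" where
  "Kgrp = {g \<in> SL2. g ** conj_transpose g = mat 1}"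

definition a_t :: "real \<Rightarrow> cmat" where
  "a_t t = mk2 (complex_of_real (exp (t/2))) 0 0 (complex_of_real (exp (-t/2)))"

definition Aplus :: "cmat set" where
  "Aplus = {a_t t | t. t \<ge> 0}"

definition Mgrp :: "cmat set" where
  "Mgrp = {mk2 (exp (\<i> * complex_of_real \<theta>)) 0 0 (exp (- \<i> * complex_of_real \<theta>)) | \<theta>. True}"

text \<open>Moebius action: g = [[a,b],[c,d]] sends z to (az+b)/(cz+d); the value is
\<infinity> when cz+d = 0.\<close>
definition moeb_finite :: "cmat \<Rightarrow> complex \<Rightarrow> bool" where
  "moeb_finite g z \<longleftrightarrow> g$2$1 * z + g$2$2 \<noteq> 0"

definition moeb :: "cmat \<Rightarrow> complex \<Rightarrow> complex" where
  "moeb g z = (g$1$1 * z + g$1$2) / (g$2$1 * z + g$2$2)"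

text \<open>Preimage of H, the stabilizer of the unit circle C_0 (a set of finite points
of the Riemann sphere): g maps C_0 onto C_0.\<close>
definition Hgrp :: "cmat set" where
  "Hgrp = {g \<in> SL2.
     (\<forall>z. cmod z = 1 \<longrightarrow> moeb_finite g z \<and> cmod (moeb g z) = 1) \<and>
     (\<forall>w. cmod w = 1 \<longrightarrow> (\<exists>z. cmod z = 1 \<and> moeb_finite g z \<and> moeb g z = w))}"

definition setmul :: "cmat set \<Rightarrow> cmat set \<Rightarrow> cmat set" (infixl "\<cdot>\<cdot>" 70) where
  "A \<cdot>\<cdot> B = {x ** y | x y. x \<in> A \<and> y \<in> B}"

text \<open>Membership in PSL_2(C): the class of g lies in the image of S.\<close>
definition pmem :: "cmat \<Rightarrow> cmat set \<Rightarrow> bool" where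
  "pmem g S \<longleftrightarrow> g \<in> S \<or> - g \<in> S"

text \<open>A left-invariant metric on G = PSL_2(C) (written on representatives),
inducing the Lie group topology of G.\<close>
definition psl_left_inv_metric :: "(cmat \<Rightarrow> cmat \<Rightarrow> real) \<Rightarrow> bool" where
  "psl_left_inv_metric dG \<longleftrightarrow>
     (\<forall>g\<in>SL2. \<forall>h\<in>SL2.
        dG g h = dG (- g) h \<and> dG g h = dG h g \<and>
        (dG g h = 0 \<longleftrightarrow> (g = h \<or> g = - h)) \<and>
        (\<forall>x\<in>SL2. dG (x ** g) (x ** h) = dG g h)) \<and>
     (\<forall>g\<in>SL2. \<forall>h\<in>SL2. \<forall>l\<in>SL2. dG g l \<le> dG g h + dG h l) \<and>
     (\<forall>\<epsilon>>0. \<exists>\<delta>>0. \<forall>h\<in>SL2. norm (h - mat 1) < \<delta> \<longrightarrow> dG (mat 1) h < \<epsilon>) \<and>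
     (\<forall>\<delta>>0. \<exists>\<epsilon>>0. \<forall>h\<in>SL2. dG (mat 1) h < \<epsilon> \<longrightarrow>
        norm (h - mat 1) < \<delta> \<or> norm (h + mat 1) < \<delta>)"

definition Keps :: "(cmat \<Rightarrow> cmat \<Rightarrow> real) \<Rightarrow> real \<Rightarrow> cmat set" where
  "Keps dG \<epsilon> = {k \<in> Kgrp. dG (mat 1) k < \<epsilon>}"

end

theory Submission
  imports Defs
begin

lemma mm_comp: "((A::cmat) ** B)$i$j = A$i$1 * B$1$j + A$i$2 * B$2$j"
  by (simp add: matrix_matrix_mult_def sum_2)

lemma cmat_eq: "(A::cmat) = B \<longleftrightarrow> A$1$1 = B$1$1 \<and> A$1$2 = B$1$2 \<and> A$2$1 = B$2$1 \<and> A$2$2 = B$2$2"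
  by (simp add: vec_eq_iff forall_2)

lemma mk2_comp[simp]: "mk2 a b c d $1$1 = a" "mk2 a b c d $1$2 = b" "mk2 a b c d $2$1 = c" "mk2 a b c d $2$2 = d"
  by (simp_all add: mk2_def)

lemma mat1_comp[simp]: "(mat 1::cmat)$1$1 = 1" "(mat 1::cmat)$1$2 = 0" "(mat 1::cmat)$2$1 = 0" "(mat 1::cmat)$2$2 = 1"
  by (simp_all add: mat_def)

lemma ct_comp[simp]: "conj_transpose g $i$j = cnj (g$j$i)"
  by (simp add: conj_transpose_def)

definition ff :: "cmat \<Rightarrow> complex" where
  "ff g = g$1$1 * cnj (g$1$1) + g$1$2 * cnj (g$1$2) - g$2$1 * cnj (g$2$1) - g$2$2 * cnj (g$2$2)"

lemma K_char: "k \<in> Kgrp \<longleftrightarrow> k$1$1 * k$2$2 - k$1$2 * k$2$1 = 1 \<and>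
   k$1$1 * cnj (k$1$1) + k$1$2 * cnj (k$1$2) = 1 \<and>
   k$1$1 * cnj (k$2$1) + k$1$2 * cnj (k$2$2) = 0 \<and>
   k$2$1 * cnj (k$2$1) + k$2$2 * cnj (k$2$2) = 1"
proof -
  have e: "k$2$1 * cnj (k$1$1) + k$2$2 * cnj (k$1$2) = cnj (k$1$1 * cnj (k$2$1) + k$1$2 * cnj (k$2$2))"
    by simp
  then have e: "k$2$1 * cnj (k$1$1) + k$2$2 * cnj (k$1$2) = 0 \<longleftrightarrow> k$1$1 * cnj (k$2$1) + k$1$2 * cnj (k$2$2) = 0"
    by (metis complex_cnj_zero_iff)
  have "k ** conj_transpose k = mat 1 \<longleftrightarrow> k$1$1 * cnj (k$1$1) + k$1$2 * cnj (k$1$2) = 1 \<and>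
   k$1$1 * cnj (k$2$1) + k$1$2 * cnj (k$2$2) = 0 \<and>
   k$2$1 * cnj (k$2$1) + k$2$2 * cnj (k$2$2) = 1"
    apply (subst cmat_eq) unfolding mm_comp ct_comp mat1_comp using e by auto
  then show ?thesis
    unfolding Kgrp_def SL2_def det_2 by auto
qed


lemma cancel2: "2*(x::complex) = 2*y \<Longrightarrow> x = y" by simp
lemma cancel2i: "2*\<i>*(x::complex) = 2*\<i>*y \<Longrightarrow> x = y" by simp

lemma H_cond:
  assumes "h \<in> Hgrp"
  shows "h$1$1 * cnj (h$1$2) = h$2$1 * cnj (h$2$2) \<and>
         h$1$1 * cnj (h$1$1) + h$1$2 * cnj (h$1$2) = h$2$1 * cnj (h$2$1) + h$2$2 * cnj (h$2$2)"
proof -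
  define a where "a = h$1$1"
  define b where "b = h$1$2"
  define c where "c = h$2$1"
  define d where "d = h$2$2"
  have E: "(a*z+b) * cnj (a*z+b) = (c*z+d) * cnj (c*z+d)" if "cmod z = 1" for z
  proof -
    from assms that have fin: "c*z+d \<noteq> 0" and m: "cmod ((a*z+b)/(c*z+d)) = 1"
      unfolding Hgrp_def moeb_finite_def moeb_def a_def b_def c_def d_def by auto
    from m fin have "cmod (a*z+b) = cmod (c*z+d)" by (simp add: norm_divide)
    then have "complex_of_real ((cmod (a*z+b))^2) = complex_of_real ((cmod (c*z+d))^2)" by simp
    then show ?thesis by (simp only: complex_norm_square)
  qed
  have e1: "(a+b)*(cnj a + cnj b) = (c+d)*(cnj c + cnj d)" using E[of 1] by simp
  have e2: "(-a+b)*(-cnj a + cnj b) = (-c+d)*(-cnj c + cnj d)" using E[of "-1"] by simp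
  have e3: "(a*\<i>+b)*(-\<i>*cnj a + cnj b) = (c*\<i>+d)*(-\<i>*cnj c + cnj d)" using E[of "\<i>"] by (simp add: mult.commute)
  have e4: "(-a*\<i>+b)*(\<i>*cnj a + cnj b) = (-c*\<i>+d)*(\<i>*cnj c + cnj d)" using E[of "-\<i>"] by (simp add: mult.commute add.commute)
  have i1: "(a+b)*(cnj a + cnj b) - (-a+b)*(-cnj a + cnj b) = 2*(a*cnj b + b*cnj a)" for a b :: complex
    by (simp add: algebra_simps)
  have i2: "(a*\<i>+b)*(-\<i>*cnj a + cnj b) - (-a*\<i>+b)*(\<i>*cnj a + cnj b) = 2*\<i>*(a*cnj b - b*cnj a)" for a b :: complex
    by (simp add: algebra_simps)
  have i3: "(a+b)*(cnj a + cnj b) + (-a+b)*(-cnj a + cnj b) = 2*(a*cnj a + b*cnj b)" for a b :: complex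
    by (simp add: algebra_simps)
  have P: "a*cnj b + b*cnj a = c*cnj d + d*cnj c"
  proof -
    have "2*(a*cnj b + b*cnj a) = (a+b)*(cnj a + cnj b) - (-a+b)*(-cnj a + cnj b)" by (rule i1[symmetric])
    also have "\<dots> = (c+d)*(cnj c + cnj d) - (-c+d)*(-cnj c + cnj d)" by (simp only: e1 e2)
    also have "\<dots> = 2*(c*cnj d + d*cnj c)" by (rule i1)
    finally show ?thesis by (rule cancel2)
  qed
  have Q: "a*cnj b - b*cnj a = c*cnj d - d*cnj c"
  proof -
    have "2*\<i>*(a*cnj b - b*cnj a) = (a*\<i>+b)*(-\<i>*cnj a + cnj b) - (-a*\<i>+b)*(\<i>*cnj a + cnj b)" by (rule i2[symmetric])
    also have "\<dots> = (c*\<i>+d)*(-\<i>*cnj c + cnj d) - (-c*\<i>+d)*(\<i>*cnj c + cnj d)" by (simp only: e3 e4)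
    also have "\<dots> = 2*\<i>*(c*cnj d - d*cnj c)" by (rule i2)
    finally show ?thesis by (rule cancel2i)
  qed
  have R: "a*cnj a + b*cnj b = c*cnj c + d*cnj d"
  proof -
    have "2*(a*cnj a + b*cnj b) = (a+b)*(cnj a + cnj b) + (-a+b)*(-cnj a + cnj b)" by (rule i3[symmetric])
    also have "\<dots> = (c+d)*(cnj c + cnj d) + (-c+d)*(-cnj c + cnj d)" by (simp only: e1 e2)
    also have "\<dots> = 2*(c*cnj c + d*cnj d)" by (rule i3)
    finally show ?thesis by (rule cancel2)
  qed
  have "a*cnj b = ((a*cnj b + b*cnj a) + (a*cnj b - b*cnj a))/2" by simp
  also have "\<dots> = ((c*cnj d + d*cnj c) + (c*cnj d - d*cnj c))/2" using P Q by simp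
  also have "\<dots> = c * cnj d" by simp
  finally show ?thesis using R unfolding a_def b_def c_def d_def by simp
qed


lemma ring1:
  fixes a b c d A B C D p q r u P Q R U :: complex
  assumes "a*B = c*D" "b*A = d*C" "a*A + b*B = c*C + d*D"
  shows "(a*p+b*r)*(A*P+B*R) + (a*q+b*u)*(A*Q+B*U) - (c*p+d*r)*(C*P+D*R) - (c*q+d*u)*(C*Q+D*U) = (a*A - c*C)*(p*P + q*Q - r*R - u*U)"
proof -
  have "(a*p+b*r)*(A*P+B*R) + (a*q+b*u)*(A*Q+B*U) - (c*p+d*r)*(C*P+D*R) - (c*q+d*u)*(C*Q+D*U) - (a*A - c*C)*(p*P + q*Q - r*R - u*U)
    = (a*B - c*D)*(p*R+q*U) + (b*A - d*C)*(r*P+u*Q) + ((a*A+b*B) - (c*C+d*D))*(r*R+u*U)"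
    by (simp add: algebra_simps)
  also have "\<dots> = 0" using assms by simp
  finally show ?thesis by simp
qed

lemma ring2:
  fixes p q r u P Q R U \<alpha> \<beta> \<gamma> \<delta> A B C D :: complex
  assumes "\<alpha>*A+\<beta>*B=1" "\<gamma>*C+\<delta>*D=1" "\<alpha>*C+\<beta>*D=0" "\<gamma>*A+\<delta>*B=0"
  shows "(p*\<alpha>+q*\<gamma>)*(P*A+Q*C) + (p*\<beta>+q*\<delta>)*(P*B+Q*D) - (r*\<alpha>+u*\<gamma>)*(R*A+U*C) - (r*\<beta>+u*\<delta>)*(R*B+U*D) = p*P+q*Q-r*R-u*U"
proof -
  have "(p*\<alpha>+q*\<gamma>)*(P*A+Q*C) + (p*\<beta>+q*\<delta>)*(P*B+Q*D) - (r*\<alpha>+u*\<gamma>)*(R*A+U*C) - (r*\<beta>+u*\<delta>)*(R*B+U*D) - (p*P+q*Q-r*R-u*U)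
     = (p*P - r*R)*(\<alpha>*A+\<beta>*B - 1) + (q*Q - u*U)*(\<gamma>*C+\<delta>*D - 1) + (p*Q - r*U)*(\<alpha>*C+\<beta>*D) + (q*P - u*R)*(\<gamma>*A+\<delta>*B)"
    by (simp add: algebra_simps)
  also have "\<dots> = 0" using assms by simp
  finally show ?thesis by simp
qed

lemma ring3:
  fixes a b c d A B C D :: complex
  assumes "a*B = c*D" "b*A = d*C" "a*A + b*B = c*C + d*D" "a*d - b*c = 1" "A*D - B*C = 1"
  shows "(a*A - c*C)*(a*A - c*C) = 1"
proof -
  have "(a*A - c*C)*(a*A - c*C) - 1 = (a*A - c*C)*((a*A+b*B) - (c*C+d*D)) - (A*b - C*d)*(a*B - c*D) + (a*d-b*c)*(A*D-B*C) - 1"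
    by (simp add: algebra_simps)
  also have "\<dots> = 0" using assms by (simp add: mult.commute)
  finally show ?thesis by simp
qed


lemma cn2: "z * cnj z = complex_of_real ((cmod z)^2)"
  by (simp only: complex_norm_square)

definition fr :: "cmat \<Rightarrow> real" where
  "fr g = (cmod (g$1$1))^2 + (cmod (g$1$2))^2 - (cmod (g$2$1))^2 - (cmod (g$2$2))^2"

lemma ff_fr: "ff g = complex_of_real (fr g)"
  unfolding ff_def fr_def cn2 by simp

lemma ff_H:
  assumes "h \<in> Hgrp"
  shows "\<exists>x::real. x*x = 1 \<and> ff (h ** g) = complex_of_real x * ff g"
proof -
  from H_cond[OF assms] have c1: "h$1$1 * cnj (h$1$2) = h$2$1 * cnj (h$2$2)"
    and c2: "h$1$1 * cnj (h$1$1) + h$1$2 * cnj (h$1$2) = h$2$1 * cnj (h$2$1) + h$2$2 * cnj (h$2$2)" by auto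
  from arg_cong[OF c1, of cnj] have c1': "h$1$2 * cnj (h$1$1) = h$2$2 * cnj (h$2$1)"
    by (simp add: mult.commute)
  from assms have d: "h$1$1 * h$2$2 - h$1$2 * h$2$1 = 1" unfolding Hgrp_def SL2_def det_2 by auto
  from arg_cong[OF d, of cnj] have d': "cnj (h$1$1) * cnj (h$2$2) - cnj (h$1$2) * cnj (h$2$1) = 1"
    by simp
  define x where "x = (cmod (h$1$1))^2 - (cmod (h$2$1))^2"
  have xc: "complex_of_real x = h$1$1 * cnj (h$1$1) - h$2$1 * cnj (h$2$1)"
    unfolding x_def cn2 by simp
  have "complex_of_real (x*x) = 1"
    using ring3[OF c1 c1' c2 d d'] xc by simp
  then have "x*x = 1" using of_real_eq_1_iff by blast
  moreover have "ff (h ** g) = complex_of_real x * ff g"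
    unfolding xc ff_def mm_comp complex_cnj_add complex_cnj_mult
    by (rule ring1[OF c1 c1' c2])
  ultimately show ?thesis by blast
qed

lemma ff_K:
  assumes "k \<in> Kgrp"
  shows "ff (g ** k) = ff g"
proof -
  from assms[unfolded K_char] have h1: "k$1$1 * cnj (k$1$1) + k$1$2 * cnj (k$1$2) = 1"
    and h3: "k$1$1 * cnj (k$2$1) + k$1$2 * cnj (k$2$2) = 0"
    and h2: "k$2$1 * cnj (k$2$1) + k$2$2 * cnj (k$2$2) = 1" by auto
  from arg_cong[OF h3, of cnj] have h4: "k$2$1 * cnj (k$1$1) + k$2$2 * cnj (k$1$2) = 0"
    by (simp add: mult.commute)
  show ?thesis
    unfolding ff_def mm_comp complex_cnj_add complex_cnj_mult
    by (rule ring2[OF h1 h2 h3 h4])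
qed

lemma ff_K0: assumes "k \<in> Kgrp" shows "ff k = 0"
proof -
  from assms[unfolded K_char] have h1: "k$1$1 * cnj (k$1$1) + k$1$2 * cnj (k$1$2) = 1"
    and h2: "k$2$1 * cnj (k$2$1) + k$2$2 * cnj (k$2$2) = 1" by auto
  have "ff k = (k$1$1 * cnj (k$1$1) + k$1$2 * cnj (k$1$2)) - (k$2$1 * cnj (k$2$1) + k$2$2 * cnj (k$2$2))"
    unfolding ff_def by (simp add: algebra_simps)
  then show ?thesis using h1 h2 by simp
qed

lemma K_real: assumes "k \<in> Kgrp" shows "(cmod (k$1$1))^2 + (cmod (k$1$2))^2 = 1 \<and> (cmod (k$2$1))^2 + (cmod (k$2$2))^2 = 1"
proof -
  from assms[unfolded K_char cn2] have "complex_of_real ((cmod (k$1$1))^2 + (cmod (k$1$2))^2) = 1"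
    "complex_of_real ((cmod (k$2$1))^2 + (cmod (k$2$2))^2) = 1" by auto
  then show ?thesis using of_real_eq_1_iff by blast
qed

lemma ff_neg: "ff (- g) = ff g"
  unfolding ff_def by simp

lemma neg_mul: "(- X :: cmat) ** (Y::cmat) = - (X ** Y)"
  unfolding cmat_eq by (simp add: mm_comp)

lemma at_comp[simp]: "a_t t $1$1 = complex_of_real (exp (t/2))" "a_t t $1$2 = 0" "a_t t $2$1 = 0"
   "a_t t $2$2 = complex_of_real (exp (-t/2))"
  by (simp_all add: a_t_def)

lemma ex2: "(exp (x/2))^2 = exp (x::real)"
  by (simp add: power2_eq_square exp_add[symmetric])

lemma ex2': "(exp (-(x/2)))^2 = exp (-(x::real))"
  by (simp add: power2_eq_square exp_add[symmetric])

lemma fr_at: "fr (a_t t) = exp t - exp (-t)"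
  unfolding fr_def by (simp add: ex2 ex2')

lemma fr_kat: assumes "k \<in> Kgrp"
  shows "fr (k ** a_t s) = ((cmod (k$1$1))^2 - (cmod (k$2$1))^2) * (exp s - exp (-s))"
proof -
  have "fr (k ** a_t s) = (cmod (k$1$1))^2 * exp s + (cmod (k$1$2))^2 * exp (-s) - (cmod (k$2$1))^2 * exp s - (cmod (k$2$2))^2 * exp (-s)"
    unfolding fr_def mm_comp by (simp add: norm_mult power_mult_distrib ex2 ex2')
  moreover have "(cmod (k$1$2))^2 = 1 - (cmod (k$1$1))^2" "(cmod (k$2$2))^2 = 1 - (cmod (k$2$1))^2"
    using K_real[OF assms] by auto
  ultimately show ?thesis by (simp add: algebra_simps)
qed


lemma sinh_mono_abs:
  fixes t s :: real
  assumes "\<bar>exp t - exp (-t)\<bar> \<le> exp s - exp (-s)"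
  shows "\<bar>t\<bar> \<le> s"
proof (rule ccontr)
  assume "\<not> \<bar>t\<bar> \<le> s"
  then have "s < \<bar>t\<bar>" by simp
  then have "exp s < exp \<bar>t\<bar>" "exp (-\<bar>t\<bar>) < exp (-s)" by auto
  moreover have "\<bar>exp t - exp (-t)\<bar> = exp \<bar>t\<bar> - exp (-\<bar>t\<bar>)"
  proof (cases "t \<ge> 0")
    case True then show ?thesis by simp
  next
    case False then have "exp t < exp (-t)" by simp
    then show ?thesis using False by simp
  qed
  ultimately show False using assms by linarith
qed

lemma part1:
  assumes "s > 0" "pmem (a_t t) (Hgrp \<cdot>\<cdot> Kgrp \<cdot>\<cdot> {a_t s} \<cdot>\<cdot> Kgrp)"
  shows "\<bar>t\<bar> \<le> s"
proof -
  from assms(2) obtain h k k' where hk: "h \<in> Hgrp" "k \<in> Kgrp" "k' \<in> Kgrp"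
    and eq: "a_t t = ((h ** k) ** a_t s) ** k' \<or> - a_t t = ((h ** k) ** a_t s) ** k'"
    unfolding pmem_def setmul_def by blast
  have "ff (a_t t) = ff (((h ** k) ** a_t s) ** k')" using eq ff_neg by metis
  also have "\<dots> = ff ((h ** k) ** a_t s)" by (rule ff_K[OF hk(3)])
  also have "\<dots> = ff (h ** (k ** a_t s))" by (simp add: matrix_mul_assoc)
  finally have e: "ff (a_t t) = ff (h ** (k ** a_t s))" .
  obtain x :: real where x: "x*x = 1" "ff (h ** (k ** a_t s)) = complex_of_real x * ff (k ** a_t s)"
    using ff_H[OF hk(1)] by blast
  from e x(2) have "fr (a_t t) = x * fr (k ** a_t s)"
    unfolding ff_fr by (metis of_real_eq_iff of_real_mult)
  then have e2: "exp t - exp (-t) = x * (((cmod (k$1$1))^2 - (cmod (k$2$1))^2) * (exp s - exp (-s)))"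
    using fr_at fr_kat[OF hk(2)] by simp
  have ax: "\<bar>x\<bar> = 1" using x(1)
    by (metis abs_mult_self_eq abs_one mult_cancel_right1 abs_of_nonneg zero_le_one real_sqrt_abs2)
  have u: "(cmod (k$1$1))^2 \<le> 1" "(cmod (k$2$1))^2 \<le> 1"
    using K_real[OF hk(2)] by (smt (verit) zero_le_power2)+
  have "\<bar>(cmod (k$1$1))^2 - (cmod (k$2$1))^2\<bar> \<le> 1"
    using u by (smt (verit) zero_le_power2)
  moreover have "exp s - exp (-s) \<ge> 0" using assms(1) by simp
  ultimately have "\<bar>((cmod (k$1$1))^2 - (cmod (k$2$1))^2) * (exp s - exp (-s))\<bar> \<le> exp s - exp (-s)"
    by (simp add: abs_mult mult_left_le_one_le)
  then have "\<bar>exp t - exp (-t)\<bar> \<le> exp s - exp (-s)"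
    unfolding e2 abs_mult ax by simp
  then show ?thesis by (rule sinh_mono_abs)
qed


lemma at_inv: "a_t s ** a_t (-s) = mat 1"
  unfolding cmat_eq mm_comp by (simp flip: of_real_mult exp_add)

lemma fr_mid: "fr ((a_t t ** k) ** a_t (-s)) =
   (cmod (k$1$1))^2 * (exp t * exp (-s)) + (cmod (k$1$2))^2 * (exp t * exp s)
   - (cmod (k$2$1))^2 * (exp (-t) * exp (-s)) - (cmod (k$2$2))^2 * (exp (-t) * exp s)"
  unfolding fr_def mm_comp by (simp add: norm_mult power_mult_distrib ex2 ex2' algebra_simps)

lemma real_bound:
  fixes A B G D E S :: real
  assumes "A \<ge> 0" "0\<le>G" "G\<le>1" "0\<le>D" "D\<le>1" "E>0" "S\<ge>1"
    "A*(E*(1/S)) + B*(E*S) - G*((1/E)*(1/S)) - D*((1/E)*S) = 0"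
  shows "B \<le> 2/(E*E)"
proof -
  have S0: "S > 0" using assms by simp
  have a1: "A*(E*(1/S)) \<ge> 0" using assms S0 by simp
  have a2: "G*((1/E)*(1/S)) \<le> (1/E)*(1/S)" by (rule mult_left_le_one_le) (use assms S0 in auto)
  have a3: "D*((1/E)*S) \<le> (1/E)*S" by (rule mult_left_le_one_le) (use assms S0 in auto)
  have h1: "B*(E*S) \<le> (1/E)*(1/S) + (1/E)*S" using assms(8) a1 a2 a3 by linarith
  have "B = (B*(E*S)) * (1/(E*S))" using assms S0 by simp
  also have "\<dots> \<le> ((1/E)*(1/S) + (1/E)*S) * (1/(E*S))"
    using h1 assms S0 by (intro mult_right_mono) auto
  also have "\<dots> = (1/(S*S) + 1)/(E*E)" using assms S0 by (simp add: field_simps)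
  also have "\<dots> \<le> 2/(E*E)"
  proof -
    have "1 \<le> S*S" using assms(7) by (metis mult_mono' mult_1 zero_le_one)
    then have "1/(S*S) \<le> 1" by simp
    then show ?thesis using assms by (intro divide_right_mono) auto
  qed
  finally show ?thesis .
qed

lemma K_struct: assumes "k \<in> Kgrp"
  shows "k$2$2 = cnj (k$1$1) \<and> k$2$1 = - cnj (k$1$2)"
proof -
  define \<alpha> where "\<alpha> = k$1$1"
  define \<beta> where "\<beta> = k$1$2"
  define \<gamma> where "\<gamma> = k$2$1"
  define \<delta> where "\<delta> = k$2$2"
  from assms[unfolded K_char] have h1: "\<alpha> * cnj \<alpha> + \<beta> * cnj \<beta> = 1"
    and h3: "\<alpha> * cnj \<gamma> + \<beta> * cnj \<delta> = 0" and d: "\<alpha>*\<delta> - \<beta>*\<gamma> = 1"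
    unfolding \<alpha>_def \<beta>_def \<gamma>_def \<delta>_def by auto
  from arg_cong[OF h3, of cnj] have h4: "\<gamma> * cnj \<alpha> + \<delta> * cnj \<beta> = 0"
    by (simp add: mult.commute)
  have "\<delta> - cnj \<alpha> = -\<delta>*(\<alpha> * cnj \<alpha> + \<beta> * cnj \<beta> - 1) + cnj \<alpha>*(\<alpha>*\<delta> - \<beta>*\<gamma> - 1) + \<beta>*(\<gamma> * cnj \<alpha> + \<delta> * cnj \<beta>)"
    by (simp add: algebra_simps)
  also have "\<dots> = 0" using h1 h4 d by simp
  finally have 1: "\<delta> = cnj \<alpha>" by simp
  have "\<gamma> + cnj \<beta> = \<alpha>*(\<gamma> * cnj \<alpha> + \<delta> * cnj \<beta>) - \<gamma>*(\<alpha> * cnj \<alpha> + \<beta> * cnj \<beta> - 1) - cnj \<beta>*(\<alpha>*\<delta> - \<beta>*\<gamma> - 1)"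
    by (simp add: algebra_simps)
  also have "\<dots> = 0" using h1 h4 d by simp
  finally have 2: "\<gamma> = - cnj \<beta>" by (simp add: add_eq_0_iff)
  show ?thesis using 1 2 unfolding \<alpha>_def \<beta>_def \<gamma>_def \<delta>_def by simp
qed

lemma norm_cmat: "norm (X::cmat) \<le> cmod (X$1$1) + cmod (X$1$2) + cmod (X$2$1) + cmod (X$2$2)"
proof -
  have "norm X \<le> (\<Sum>i\<in>UNIV. norm (X$i))" by (simp add: norm_vec_def L2_set_le_sum)
  also have "\<dots> = norm (X$1) + norm (X$2)" by (simp add: sum_2)
  also have "\<dots> \<le> (cmod (X$1$1) + cmod (X$1$2)) + (cmod (X$2$1) + cmod (X$2$2))"
  proof -
    have "norm (X$i) \<le> cmod (X$i$1) + cmod (X$i$2)" for i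
    proof -
      have "norm (X$i) \<le> (\<Sum>j\<in>UNIV. norm (X$i$j))" by (simp add: norm_vec_def L2_set_le_sum)
      then show ?thesis by (simp add: sum_2)
    qed
    then show ?thesis by (intro add_mono) auto
  qed
  finally show ?thesis by simp
qed


lemma beta_small:
  assumes k: "k \<in> Kgrp" and s: "s \<ge> 0" and h: "h \<in> Hgrp" and k': "k' \<in> Kgrp"
    and eq: "a_t t ** k = (h ** k') ** a_t s \<or> - (a_t t ** k) = (h ** k') ** a_t s"
  shows "cmod (k$1$2) \<le> 2 / exp t"
proof -
  have hk: "ff (h ** k') = 0"
    using ff_H[OF h, of k'] ff_K0[OF k'] by auto
  have w: "((h ** k') ** a_t s) ** a_t (-s) = h ** k'"
    by (simp add: at_inv flip: matrix_mul_assoc)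
  have "ff ((a_t t ** k) ** a_t (-s)) = 0"
    using eq
  proof
    assume "a_t t ** k = (h ** k') ** a_t s"
    then show ?thesis using w hk by simp
  next
    assume e: "- (a_t t ** k) = (h ** k') ** a_t s"
    have "ff ((a_t t ** k) ** a_t (-s)) = ff ((- (a_t t ** k)) ** a_t (-s))"
      by (simp add: neg_mul ff_neg)
    then show ?thesis using e w hk by simp
  qed
  then have "fr ((a_t t ** k) ** a_t (-s)) = 0" unfolding ff_fr by simp
  then have z: "(cmod (k$1$1))^2 * (exp t * (1/exp s)) + (cmod (k$1$2))^2 * (exp t * exp s)
   - (cmod (k$2$1))^2 * ((1/exp t) * (1/exp s)) - (cmod (k$2$2))^2 * ((1/exp t) * exp s) = 0"
    unfolding fr_mid by (simp add: exp_minus inverse_eq_divide)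
  have kr: "(cmod (k$2$1))^2 \<le> 1" "(cmod (k$2$2))^2 \<le> 1"
    using K_real[OF k] by (smt (verit) zero_le_power2)+
  have S1: "exp s \<ge> 1" using s by simp
  have "(cmod (k$1$2))^2 \<le> 2/(exp t * exp t)"
    by (rule real_bound[OF _ _ kr(1) _ kr(2) _ S1 z]) auto
  also have "\<dots> \<le> (2 / exp t)^2" by (simp add: power2_eq_square field_simps)
  finally show ?thesis by (rule power2_le_imp_le) simp
qed


lemma decomp:
  assumes k: "k \<in> Kgrp" and b: "cmod (k$1$2) < 1"
  shows "\<exists>k1 m. k1 \<in> Kgrp \<and> m \<in> Mgrp \<and> k = k1 ** m \<and> norm (k1 - mat 1) \<le> 4 * cmod (k$1$2)"
proof -
  define \<alpha> where "\<alpha> = k$1$1"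
  define \<beta> where "\<beta> = k$1$2"
  define \<sigma> where "\<sigma> = sgn \<alpha>"
  have st: "k$2$2 = cnj \<alpha>" "k$2$1 = - cnj \<beta>" using K_struct[OF k] unfolding \<alpha>_def \<beta>_def by auto
  have nr: "(cmod \<alpha>)^2 + (cmod \<beta>)^2 = 1" using K_real[OF k] unfolding \<alpha>_def \<beta>_def by auto
  have b': "cmod \<beta> < 1" using b unfolding \<beta>_def .
  have "(cmod \<beta>)^2 < 1^2" by (rule power_strict_mono) (use b' in auto)
  then have "(cmod \<beta>)^2 < 1" by simp
  then have "(cmod \<alpha>)^2 > 0" using nr by linarith
  then have a0: "\<alpha> \<noteq> 0" by (cases "\<alpha> = 0") auto
  have ns: "cmod \<sigma> = 1" unfolding \<sigma>_def using a0 by (simp add: norm_sgn)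
  have ss: "\<sigma> * cnj \<sigma> = 1" unfolding cn2 \<sigma>_def using a0 by (simp add: norm_sgn)
  have ss': "cnj \<sigma> * \<sigma> = 1" using ss by (simp add: mult.commute)
  have as: "\<alpha> = complex_of_real (cmod \<alpha>) * \<sigma>" unfolding \<sigma>_def using a0 by (simp add: sgn_eq)
  have ans: "\<alpha> * cnj \<sigma> = complex_of_real (cmod \<alpha>)"
    by (subst as) (simp add: mult.assoc ss)
  have ans2: "cnj \<alpha> * \<sigma> = complex_of_real (cmod \<alpha>)"
    by (subst as) (simp add: mult.assoc ss')
  define minv where "minv = mk2 (cnj \<sigma>) 0 0 \<sigma>"
  define m where "m = mk2 \<sigma> 0 0 (cnj \<sigma>)"
  define k1 where "k1 = k ** minv"
  have c11: "k1$1$1 = complex_of_real (cmod \<alpha>)" unfolding k1_def minv_def mm_comp using ans by (simp add: \<alpha>_def)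
  have c12: "k1$1$2 = \<beta> * \<sigma>" unfolding k1_def minv_def mm_comp by (simp add: \<beta>_def)
  have c21: "k1$2$1 = - cnj \<beta> * cnj \<sigma>" unfolding k1_def minv_def mm_comp by (simp add: st)
  have c22: "k1$2$2 = complex_of_real (cmod \<alpha>)" unfolding k1_def minv_def mm_comp using ans2 by (simp add: st)
  have "k1 \<in> Kgrp"
    unfolding K_char c11 c12 c21 c22
  proof (intro conjI)
    have "complex_of_real (cmod \<alpha>) * complex_of_real (cmod \<alpha>) - \<beta> * \<sigma> * (- cnj \<beta> * cnj \<sigma>)
        = (complex_of_real ((cmod \<alpha>)^2) + \<beta> * cnj \<beta>) * (\<sigma> * cnj \<sigma>)"
      using ss by (simp add: algebra_simps power2_eq_square)
    also have "\<dots> = 1" by (simp only: ss cn2 mult_1_right flip: of_real_add) (simp add: nr ns)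
    finally show "complex_of_real (cmod \<alpha>) * complex_of_real (cmod \<alpha>) - \<beta> * \<sigma> * (- cnj \<beta> * cnj \<sigma>) = 1" .
    have "complex_of_real (cmod \<alpha>) * cnj (complex_of_real (cmod \<alpha>)) + \<beta> * \<sigma> * cnj (\<beta> * \<sigma>)
       = complex_of_real ((cmod \<alpha>)^2) + (\<beta> * cnj \<beta>) * (\<sigma> * cnj \<sigma>)"
      by (simp add: algebra_simps power2_eq_square)
    also have "\<dots> = complex_of_real ((cmod \<alpha>)^2 + (cmod \<beta>)^2)" using ss by (simp add: cn2)
    finally show "complex_of_real (cmod \<alpha>) * cnj (complex_of_real (cmod \<alpha>)) + \<beta> * \<sigma> * cnj (\<beta> * \<sigma>) = 1"
      using nr by simp
    show "complex_of_real (cmod \<alpha>) * cnj (- cnj \<beta> * cnj \<sigma>) + \<beta> * \<sigma> * cnj (complex_of_real (cmod \<alpha>)) = 0"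
      by (simp add: algebra_simps)
    have "- cnj \<beta> * cnj \<sigma> * cnj (- cnj \<beta> * cnj \<sigma>) + complex_of_real (cmod \<alpha>) * cnj (complex_of_real (cmod \<alpha>))
       = complex_of_real ((cmod \<alpha>)^2) + (\<beta> * cnj \<beta>) * (\<sigma> * cnj \<sigma>)"
      by (simp add: algebra_simps power2_eq_square)
    also have "\<dots> = complex_of_real ((cmod \<alpha>)^2 + (cmod \<beta>)^2)" using ss by (simp add: cn2)
    finally show "- cnj \<beta> * cnj \<sigma> * cnj (- cnj \<beta> * cnj \<sigma>) + complex_of_real (cmod \<alpha>) * cnj (complex_of_real (cmod \<alpha>)) = 1"
      using nr by simp
  qed
  moreover have "m \<in> Mgrp"
  proof -
    have "exp (\<i> * complex_of_real (Arg \<alpha>)) = \<sigma>"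
      unfolding \<sigma>_def using a0 by (simp add: cis_conv_exp[symmetric] cis_Arg)
    moreover have "exp (- \<i> * complex_of_real (Arg \<alpha>)) = cnj \<sigma>"
    proof -
      have "exp (- \<i> * complex_of_real (Arg \<alpha>)) = cis (- Arg \<alpha>)" by (simp add: cis_conv_exp)
      also have "\<dots> = cnj (cis (Arg \<alpha>))" by (simp add: cis_cnj)
      finally show ?thesis unfolding \<sigma>_def using a0 by (simp add: cis_Arg)
    qed
    ultimately have "m = mk2 (exp (\<i> * complex_of_real (Arg \<alpha>))) 0 0 (exp (- \<i> * complex_of_real (Arg \<alpha>)))"
      unfolding m_def by simp
    then show ?thesis unfolding Mgrp_def by blast
  qed
  moreover have "k = k1 ** m"
  proof -
    have "minv ** m = mat 1" unfolding minv_def m_def cmat_eq mm_comp using ss ss' by simp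
    then show ?thesis unfolding k1_def by (simp flip: matrix_mul_assoc)
  qed
  moreover have "norm (k1 - mat 1) \<le> 4 * cmod (k$1$2)"
  proof -
    have "norm (k1 - mat 1) \<le> cmod ((k1 - mat 1)$1$1) + cmod ((k1 - mat 1)$1$2) + cmod ((k1 - mat 1)$2$1) + cmod ((k1 - mat 1)$2$2)"
      by (rule norm_cmat)
    also have "\<dots> = 2 * \<bar>cmod \<alpha> - 1\<bar> + 2 * cmod \<beta>"
    proof -
      have e11: "(k1 - mat 1)$1$1 = complex_of_real (cmod \<alpha> - 1)" by (simp add: c11)
      have e12: "(k1 - mat 1)$1$2 = \<beta> * \<sigma>" by (simp add: c12)
      have e21: "(k1 - mat 1)$2$1 = - cnj \<beta> * cnj \<sigma>" by (simp add: c21)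
      have e22: "(k1 - mat 1)$2$2 = complex_of_real (cmod \<alpha> - 1)" by (simp add: c22)
      show ?thesis unfolding e11 e12 e21 e22 norm_of_real by (simp add: norm_mult ns)
    qed
    also have "\<dots> \<le> 4 * cmod \<beta>"
    proof -
      have nr': "cmod \<alpha> * cmod \<alpha> = 1 - cmod \<beta> * cmod \<beta>" using nr by (simp add: power2_eq_square)
      have bb: "cmod \<beta> * cmod \<beta> \<le> cmod \<beta>" by (rule mult_left_le_one_le) (use b' in auto)
      have "(cmod \<alpha>)^2 \<le> 1^2" using nr' by (simp add: power2_eq_square)
      then have a1: "cmod \<alpha> \<le> 1" by (rule power2_le_imp_le) simp
      have "(1 - cmod \<beta>)*(1 - cmod \<beta>) \<le> cmod \<alpha> * cmod \<alpha>"
        unfolding nr' using bb by (simp add: algebra_simps)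
      then have "(1 - cmod \<beta>)^2 \<le> (cmod \<alpha>)^2" by (simp add: power2_eq_square)
      then have "1 - cmod \<beta> \<le> cmod \<alpha>" by (rule power2_le_imp_le) simp
      then show ?thesis using a1 by simp
    qed
    finally show ?thesis unfolding \<beta>_def .
  qed
  ultimately show ?thesis by blast
qed


theorem proposition4p2:
  fixes dG :: "complex^2^2 \<Rightarrow> complex^2^2 \<Rightarrow> real"
  assumes "psl_left_inv_metric dG"
  shows "(\<forall>t s. s > 0 \<longrightarrow> pmem (a_t t) (Hgrp \<cdot>\<cdot> Kgrp \<cdot>\<cdot> {a_t s} \<cdot>\<cdot> Kgrp) \<longrightarrow> \<bar>t\<bar> \<le> s)
       \<and> (\<forall>\<epsilon>>0. \<exists>T0. {k \<in> Kgrp. \<exists>t>T0. pmem (a_t t ** k) (Hgrp \<cdot>\<cdot> Kgrp \<cdot>\<cdot> Aplus)}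
                       \<subseteq> {k. pmem k (Keps dG \<epsilon> \<cdot>\<cdot> Mgrp)})"
proof
  show "\<forall>t s. s > 0 \<longrightarrow> pmem (a_t t) (Hgrp \<cdot>\<cdot> Kgrp \<cdot>\<cdot> {a_t s} \<cdot>\<cdot> Kgrp) \<longrightarrow> \<bar>t\<bar> \<le> s"
    using part1 by blast
next
  show "\<forall>\<epsilon>>0. \<exists>T0. {k \<in> Kgrp. \<exists>t>T0. pmem (a_t t ** k) (Hgrp \<cdot>\<cdot> Kgrp \<cdot>\<cdot> Aplus)}
                       \<subseteq> {k. pmem k (Keps dG \<epsilon> \<cdot>\<cdot> Mgrp)}"
  proof (intro allI impI)
    fix \<epsilon> :: real assume e: "\<epsilon> > 0"
    from assms e obtain \<delta> where d: "\<delta> > 0"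
      and hd: "\<forall>h\<in>SL2. norm (h - mat 1) < \<delta> \<longrightarrow> dG (mat 1) h < \<epsilon>"
      unfolding psl_left_inv_metric_def by blast
    define \<delta>1 where "\<delta>1 = min \<delta> 1"
    have d1: "\<delta>1 > 0" "\<delta>1 \<le> \<delta>" "\<delta>1 \<le> 1" using d unfolding \<delta>1_def by auto
    show "\<exists>T0. {k \<in> Kgrp. \<exists>t>T0. pmem (a_t t ** k) (Hgrp \<cdot>\<cdot> Kgrp \<cdot>\<cdot> Aplus)}
                       \<subseteq> {k. pmem k (Keps dG \<epsilon> \<cdot>\<cdot> Mgrp)}"
    proof (intro exI subsetI)
      fix k assume "k \<in> {k \<in> Kgrp. \<exists>t>ln (8/\<delta>1). pmem (a_t t ** k) (Hgrp \<cdot>\<cdot> Kgrp \<cdot>\<cdot> Aplus)}"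
      then obtain t where k: "k \<in> Kgrp" and t: "t > ln (8/\<delta>1)"
        and p: "pmem (a_t t ** k) (Hgrp \<cdot>\<cdot> Kgrp \<cdot>\<cdot> Aplus)" by blast
      from p obtain h k' s where h: "h \<in> Hgrp" and k': "k' \<in> Kgrp" and s: "s \<ge> 0"
        and eq: "a_t t ** k = (h ** k') ** a_t s \<or> - (a_t t ** k) = (h ** k') ** a_t s"
        unfolding pmem_def setmul_def Aplus_def by blast
      have bs: "cmod (k$1$2) \<le> 2 / exp t" by (rule beta_small[OF k s h k' eq])
      have "exp t > exp (ln (8/\<delta>1))" using t by simp
      then have et: "exp t > 8/\<delta>1" using d1 by simp
      have "2 / exp t < 2 / (8/\<delta>1)"
        using et d1 by (intro divide_strict_left_mono) auto
      then have "cmod (k$1$2) < \<delta>1/4" using bs by simp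
      then have b4: "4 * cmod (k$1$2) < \<delta>1" and b1: "cmod (k$1$2) < 1" using d1 by auto
      obtain k1 m where k1: "k1 \<in> Kgrp" and m: "m \<in> Mgrp" and km: "k = k1 ** m"
        and nk: "norm (k1 - mat 1) \<le> 4 * cmod (k$1$2)"
        using decomp[OF k b1] by blast
      have "norm (k1 - mat 1) < \<delta>" using nk b4 d1 by linarith
      moreover have "k1 \<in> SL2" using k1 unfolding Kgrp_def by blast
      ultimately have "dG (mat 1) k1 < \<epsilon>" using hd by blast
      then have "k1 \<in> Keps dG \<epsilon>" using k1 unfolding Keps_def by blast
      then have "k \<in> Keps dG \<epsilon> \<cdot>\<cdot> Mgrp" using m km unfolding setmul_def by blast
      then show "k \<in> {k. pmem k (Keps dG \<epsilon> \<cdot>\<cdot> Mgrp)}" unfolding pmem_def by blast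
    qed
  qed
qed

end
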